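(* Let $q$ be a polynomial of degree $n$. Then $\mathcal D_\zeta(q)\le n^2\|q\|_{H^2}^2$ for every $\zeta\in\overline{\mathbb D}$.
   Context: $\mathbb D$ is the open unit disk, $H^2$ the Hardy space with $\|\sum c_kz^k\|_{H^2}^2=\sum|c_k|^2$. For $\zeta\in\overline{\mathbb D}$, $\mathcal D_\zeta$ is the set of holomorphic $f$ on $\mathbb D$ of the form $f(z)=a+(z-\zeta)g(z)$ with $g\in H^2$, $a\in\mathbb C$; for such $f$ set $\mathcal D_\zeta(f):=\|g\|_{H^2}^2$. *)

theory Defs
  imports "HOL-Analysis.Analysis" "HOL-Computational_Algebra.Polynomial"
begin

definition taylor_coeff :: "(complex \<Rightarrow> complex) \<Rightarrow> nat \<Rightarrow> complex" where
  "taylor_coeff f k = (deriv ^^ k) f 0 / of_nat (fact k)"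

definition H2_norm_sq :: "(complex \<Rightarrow> complex) \<Rightarrow> real" where
  "H2_norm_sq f = (\<Sum>k. (cmod (taylor_coeff f k))\<^sup>2)"

definition in_H2 :: "(complex \<Rightarrow> complex) \<Rightarrow> bool" where
  "in_H2 f \<longleftrightarrow> f holomorphic_on ball 0 1 \<and> summable (\<lambda>k. (cmod (taylor_coeff f k))\<^sup>2)"

definition in_Dzeta :: "complex \<Rightarrow> (complex \<Rightarrow> complex) \<Rightarrow> bool" where
  "in_Dzeta \<zeta> f \<longleftrightarrow> (\<exists>a g. in_H2 g \<and> (\<forall>z\<in>ball 0 1. f z = a + (z - \<zeta>) * g z))"

definition Dzeta :: "complex \<Rightarrow> (complex \<Rightarrow> complex) \<Rightarrow> real" where
  "Dzeta \<zeta> f = H2_norm_sq (SOME g. in_H2 g \<and> (\<exists>a. \<forall>z\<in>ball 0 1. f z = a + (z - \<zeta>) * g z))"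

end

theory Submission
  imports Defs "HOL-Complex_Analysis.Complex_Analysis"
begin

lemma tc_fps: "f has_fps_expansion F \<Longrightarrow> taylor_coeff f k = fps_nth F k"
  by (simp add: taylor_coeff_def fps_nth_fps_expansion)

lemma poly_fps: "poly q has_fps_expansion fps_of_poly q"
proof -
  have "eval_fps (fps_of_poly q) has_fps_expansion fps_of_poly q"
    by (rule eval_fps_has_fps_expansion) simp
  moreover have "eval_fps (fps_of_poly q) = poly q" by (rule ext) simp
  ultimately show ?thesis by simp
qed

lemma tc_poly: "taylor_coeff (poly q) k = coeff q k"
  using tc_fps[OF poly_fps] by simp

lemma synth_rec: "coeff q (Suc k) + c * coeff (synthetic_div q c) (Suc k) = coeff (synthetic_div q c) k"
proof -
  have "coeff (q + smult c (synthetic_div q c)) (Suc k) = coeff (pCons (poly q c) (synthetic_div q c)) (Suc k)"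
    by (subst synthetic_div_correct) simp
  thus ?thesis by simp
qed

lemma uniq:
  fixes q :: "complex poly"
  assumes z: "cmod \<zeta> \<le> 1" and g: "in_H2 g" and eq: "\<forall>z\<in>ball 0 1. poly q z = a + (z - \<zeta>) * g z"
  shows "taylor_coeff g k = coeff (synthetic_div q \<zeta>) k"
proof -
  define s where "s = synthetic_div q \<zeta>"
  define G where "G = fps_expansion g 0"
  have hol: "g holomorphic_on ball 0 1" and sm: "summable (\<lambda>k. (cmod (taylor_coeff g k))\<^sup>2)"
    using g by (auto simp: in_H2_def)
  have gG: "g has_fps_expansion G" unfolding G_def
    by (rule has_fps_expansion_fps_expansion[OF _ _ hol]) auto
  have tg: "\<And>k. taylor_coeff g k = fps_nth G k" by (rule tc_fps[OF gG])
  have e1: "(\<lambda>z. a + (z - \<zeta>) * g z) has_fps_expansion fps_const a + (fps_X - fps_const \<zeta>) * G"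
    by (intro fps_expansion_intros gG)
  have ev: "eventually (\<lambda>z. a + (z - \<zeta>) * g z = poly q z) (nhds 0)"
    using eq by (intro eventually_nhds_in_open[THEN eventually_mono, of "ball 0 1"]) auto
  have e2: "poly q has_fps_expansion fps_const a + (fps_X - fps_const \<zeta>) * G"
    using e1 has_fps_expansion_cong[OF ev refl] by blast
  have rec: "coeff q (Suc k) = fps_nth G k - \<zeta> * fps_nth G (Suc k)" for k
  proof -
    have "coeff q (Suc k) = fps_nth (fps_const a + (fps_X - fps_const \<zeta>) * G) (Suc k)"
      using tc_fps[OF e2, of "Suc k"] tc_poly[of q "Suc k"] by simp
    also have "\<dots> = fps_nth G k - \<zeta> * fps_nth G (Suc k)"
      by (simp add: algebra_simps fps_X_mult_nth)
    finally show ?thesis .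
  qed
  define d where "d k = fps_nth G k - coeff s k" for k
  have drec: "d k = \<zeta> * d (Suc k)" for k
  proof -
    have "d k - \<zeta> * d (Suc k) = (fps_nth G k - \<zeta> * fps_nth G (Suc k)) - (coeff s k - \<zeta> * coeff s (Suc k))"
      unfolding d_def by (simp add: algebra_simps)
    also have "\<dots> = 0" using rec[of k] synth_rec[of q k \<zeta>] unfolding s_def
      by (metis add_diff_cancel_left' diff_self eq_diff_eq)
    finally show ?thesis by simp
  qed
  have dmono: "cmod (d k) \<le> cmod (d (Suc k))" for k
  proof -
    have "cmod (d k) = cmod \<zeta> * cmod (d (Suc k))" using drec[of k] by (simp add: norm_mult)
    also have "\<dots> \<le> cmod (d (Suc k))" using z by (simp add: mult_left_le_one_le)
    finally show ?thesis .
  qed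
  have dmono2: "cmod (d k) \<le> cmod (d m)" if "k \<le> m" for k m
    using lift_Suc_mono_le[of "\<lambda>k. cmod (d k)", OF dmono that] .
  have ev2: "eventually (\<lambda>k. (cmod (taylor_coeff g k))\<^sup>2 = (cmod (d k))\<^sup>2) sequentially"
    using eventually_gt_at_top[of "degree s"]
    by (rule eventually_mono) (simp add: d_def tg coeff_eq_0)
  have "summable (\<lambda>k. (cmod (d k))\<^sup>2)"
    using summable_cong[OF ev2] sm by simp
  hence lim: "(\<lambda>k. (cmod (d k))\<^sup>2) \<longlonglongrightarrow> 0" by (rule summable_LIMSEQ_zero)
  have "d k = 0"
  proof (rule ccontr)
    assume "d k \<noteq> 0"
    hence pos: "(cmod (d k))\<^sup>2 > 0" by simp
    from lim pos have "eventually (\<lambda>m. (cmod (d m))\<^sup>2 < (cmod (d k))\<^sup>2) sequentially"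
      by (rule order_tendstoD)
    moreover have "eventually (\<lambda>m. k \<le> m) sequentially" by (rule eventually_ge_at_top)
    ultimately obtain m where "(cmod (d m))\<^sup>2 < (cmod (d k))\<^sup>2" "k \<le> m"
      using eventually_sequentially by (metis (mono_tags, lifting) eventually_conj eventually_happens' sequentially_bot)
    with dmono2[of k m] show False
      by (meson norm_ge_zero not_le power_mono)
  qed
  thus ?thesis unfolding d_def s_def tg by simp
qed

lemma s_zero:
  fixes q :: "complex poly"
  assumes "degree q = n" "n \<le> k"
  shows "coeff (synthetic_div q c) k = 0"
proof (cases "n = 0")
  case True
  thus ?thesis using assms synthetic_div_eq_0_iff[of q c] by simp
next
  case False
  thus ?thesis
    by (intro coeff_eq_0) (use assms degree_synthetic_div[of q c] in auto)
qed

lemma s_bound: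
  fixes q :: "complex poly"
  assumes "degree q = n" "k \<le> n" "cmod c \<le> 1"
  shows "cmod (coeff (synthetic_div q c) k) \<le> (\<Sum>j\<in>{Suc k..n}. cmod (coeff q j))"
  using assms(2)
proof (induction k rule: inc_induct)
  case base
  thus ?case using s_zero[OF assms(1) order.refl, of c] by simp
next
  case (step m)
  have "cmod (coeff (synthetic_div q c) m) = cmod (coeff q (Suc m) + c * coeff (synthetic_div q c) (Suc m))"
    by (simp add: synth_rec)
  also have "\<dots> \<le> cmod (coeff q (Suc m)) + cmod c * cmod (coeff (synthetic_div q c) (Suc m))"
    by (metis norm_mult norm_triangle_ineq)
  also have "\<dots> \<le> cmod (coeff q (Suc m)) + cmod (coeff (synthetic_div q c) (Suc m))"
    using assms(3) by (simp add: mult_left_le_one_le)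
  also have "\<dots> \<le> cmod (coeff q (Suc m)) + (\<Sum>j\<in>{Suc (Suc m)..n}. cmod (coeff q j))"
    using step.IH by simp
  also have "\<dots> = (\<Sum>j\<in>{Suc m..n}. cmod (coeff q j))"
    using step.hyps by (simp add: sum.atLeast_Suc_atMost)
  finally show ?case .
qed

theorem lemma3p1:
  fixes q :: "complex poly" and n :: nat and \<zeta> :: complex
  assumes "degree q = n" and "\<zeta> \<in> cball 0 1"
  shows "in_Dzeta \<zeta> (poly q) \<and> Dzeta \<zeta> (poly q) \<le> (real n)\<^sup>2 * H2_norm_sq (poly q)"
proof -
  define s where "s = synthetic_div q \<zeta>"
  have z: "cmod \<zeta> \<le> 1" using assms(2) by simp
  have peq: "poly q z = poly q \<zeta> + (z - \<zeta>) * poly s z" for z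
  proof -
    have "poly q z = poly ([:-\<zeta>, 1:] * s + [:poly q \<zeta>:]) z"
      unfolding s_def by (subst synthetic_div_correct') simp
    thus ?thesis by (simp add: algebra_simps)
  qed
  have H2s: "in_H2 (poly s)"
    unfolding in_H2_def tc_poly
    by (auto intro!: holomorphic_intros summable_finite[of "{..degree s}"] simp: coeff_eq_0 le_degree)
  have ex: "\<exists>g. in_H2 g \<and> (\<exists>a. \<forall>z\<in>ball 0 1. poly q z = a + (z - \<zeta>) * g z)"
    using H2s peq by blast
  hence D: "in_Dzeta \<zeta> (poly q)" unfolding in_Dzeta_def by blast
  define g where "g = (SOME g. in_H2 g \<and> (\<exists>a. \<forall>z\<in>ball 0 1. poly q z = a + (z - \<zeta>) * g z))"
  have gp: "in_H2 g \<and> (\<exists>a. \<forall>z\<in>ball 0 1. poly q z = a + (z - \<zeta>) * g z)"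
    unfolding g_def by (rule someI_ex[OF ex])
  then obtain a where "in_H2 g" "\<forall>z\<in>ball 0 1. poly q z = a + (z - \<zeta>) * g z" by blast
  from uniq[OF z this] have tg: "\<And>k. taylor_coeff g k = coeff s k" unfolding s_def .
  have "Dzeta \<zeta> (poly q) = (\<Sum>k. (cmod (coeff s k))\<^sup>2)"
    unfolding Dzeta_def g_def[symmetric] H2_norm_sq_def tg ..
  also have "\<dots> = (\<Sum>k<n. (cmod (coeff s k))\<^sup>2)"
    by (rule suminf_finite) (auto simp: s_def s_zero[OF assms(1)])
  finally have Deq: "Dzeta \<zeta> (poly q) = (\<Sum>k<n. (cmod (coeff s k))\<^sup>2)" .
  define Q where "Q = (\<Sum>k<Suc n. (cmod (coeff q k))\<^sup>2)"
  have Heq: "H2_norm_sq (poly q) = Q"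
    unfolding H2_norm_sq_def tc_poly Q_def
    by (rule suminf_finite) (auto simp: assms(1)[symmetric] coeff_eq_0)
  have each: "(cmod (coeff s k))\<^sup>2 \<le> real n * Q" if "k < n" for k
  proof -
    have "(cmod (coeff s k))\<^sup>2 \<le> (\<Sum>j\<in>{Suc k..n}. cmod (coeff q j))\<^sup>2"
      using s_bound[OF assms(1) _ z, of k] that unfolding s_def
      by (intro power_mono) auto
    also have "\<dots> \<le> (\<Sum>j\<in>{Suc k..n}. (cmod (coeff q j))\<^sup>2) * card {Suc k..n}"
      by (rule sum_squared_le_sum_of_squares)
    also have "\<dots> \<le> Q * real n"
    proof (rule mult_mono)
      show "(\<Sum>j\<in>{Suc k..n}. (cmod (coeff q j))\<^sup>2) \<le> Q"
        unfolding Q_def by (rule sum_mono2) auto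
      show "real (card {Suc k..n}) \<le> real n" by simp
      show "0 \<le> Q" unfolding Q_def by (simp add: sum_nonneg)
    qed simp
    finally show ?thesis by (simp add: mult.commute)
  qed
  have "(\<Sum>k<n. (cmod (coeff s k))\<^sup>2) \<le> (\<Sum>k<n. real n * Q)"
    by (rule sum_mono) (use each in auto)
  also have "\<dots> = (real n)\<^sup>2 * Q" by (simp add: power2_eq_square)
  finally show ?thesis using D Deq Heq by simp
qed

end
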